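(* Let $d\ge1$ and let $(\alpha_0,\alpha_1,\dots)$ be a sequence of $d\times d$ complex matrices with $\|\alpha_i\|<1$, with associated block CMV matrices $\mathcal{C}=\mathcal{C}(\alpha_0,\alpha_1,\dots)$ and $\hat{\mathcal{C}}=\hat{\mathcal{C}}(\alpha_0,\alpha_1,\dots)$. Then for every $j\in\mathbb{N}$, $$\mathcal{C}=\begin{cases}(\mathbb{1}_j\oplus\mathcal{C}^{(j)})(\mathcal{C}_j\oplus\mathbb{1}_\infty), & j\text{ even},\\ (\mathcal{C}_j\oplus\mathbb{1}_\infty)(\mathbb{1}_j\oplus\hat{\mathcal{C}}^{(j)}), & j\text{ odd},\end{cases}\qquad \hat{\mathcal{C}}=\begin{cases}(\hat{\mathcal{C}}_j\oplus\mathbb{1}_\infty)(\mathbb{1}_j\oplus\hat{\mathcal{C}}^{(j)}), & j\text{ even},\\ (\mathbb{1}_j\oplus\mathcal{C}^{(j)})(\hat{\mathcal{C}}_j\oplus\mathbb{1}_\infty), & j\text{ odd},\end{cases}$$ where $\mathcal{C}_j=\mathcal{C}_j(\alpha_0,\dots,\alpha_{j-1})$, $\hat{\mathcal{C}}_j=\hat{\mathcal{C}}_j(\alpha_0,\dots,\alpha_{j-1})$, $\mathcal{C}^{(j)}=\mathcal{C}(\alpha_j,\alpha_{j+1},\dots)$ and $\hat{\mathcal{C}}^{(j)}=\hat{\mathcal{C}}(\alpha_j,\alpha_{j+1},\dots)$. (These are $V_j$-overlapping factorizations.)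
   Context: Let $\ell^2$ have canonical basis $\{e_i\}_{i\ge0}$ and canonical subspaces $V_m=\operatorname{span}\{e_{md},\dots,e_{md+d-1}\}$, $m\ge0$, so $\ell^2=\bigoplus_{m\ge0}V_m$. For a $d\times d$ matrix $\alpha$ with $\|\alpha\|\le1$ set $\rho^L=(\mathbb{1}-\alpha^\dagger\alpha)^{1/2}$, $\rho^R=(\mathbb{1}-\alpha\alpha^\dagger)^{1/2}$ and $\Theta(\alpha)=\begin{pmatrix}\alpha^\dagger&\rho^L\\ \rho^R&-\alpha\end{pmatrix}$ ($\mathbb{1}$ the $d\times d$ identity). Given $(\alpha_0,\alpha_1,\dots)$, let $\mathcal{L}=\Theta(\alpha_0)\oplus\Theta(\alpha_2)\oplus\Theta(\alpha_4)\oplus\cdots$ and $\mathcal{M}=\mathbb{1}\oplus\Theta(\alpha_1)\oplus\Theta(\alpha_3)\oplus\cdots$ (so that $\Theta(\alpha_i)$ acts on $V_i\oplus V_{i+1}$), and define the block CMV matrices $\mathcal{C}(\alpha_0,\alpha_1,\dots)=\mathcal{L}\mathcal{M}$, $\hat{\mathcal{C}}(\alpha_0,\alpha_1,\dots)=\mathcal{M}\mathcal{L}$. For $N\ge0$ and $(\alpha_0,\dots,\alpha_{N-1})$, the finite block CMV matrices acting on $V_0\oplus\cdots\oplus V_N$ are $\mathcal{C}_N=\mathcal{L}_N\mathcal{M}_N$ and $\hat{\mathcal{C}}_N=\mathcal{M}_N\mathcal{L}_N$, where for odd $N$: $\mathcal{L}_N=\Theta(\alpha_0)\oplus\Theta(\alpha_2)\oplus\cdots\oplus\Theta(\alpha_{N-1})$,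 $\mathcal{M}_N=\mathbb{1}\oplus\Theta(\alpha_1)\oplus\cdots\oplus\Theta(\alpha_{N-2})\oplus\mathbb{1}$; for even $N$: $\mathcal{L}_N=\Theta(\alpha_0)\oplus\cdots\oplus\Theta(\alpha_{N-2})\oplus\mathbb{1}$, $\mathcal{M}_N=\mathbb{1}\oplus\Theta(\alpha_1)\oplus\cdots\oplus\Theta(\alpha_{N-1})$ (with $\mathcal{C}_0=\hat{\mathcal C}_0=\mathbb{1}$). In the factorizations, $\mathcal{C}_j,\hat{\mathcal{C}}_j$ act on $V_0\oplus\cdots\oplus V_j$; $\mathcal{C}^{(j)},\hat{\mathcal{C}}^{(j)}$ act on $\bigoplus_{m\ge j}V_m$ (with $V_j$ in the role of the first block); $\mathbb{1}_j$ is the identity on $V_0\oplus\cdots\oplus V_{j-1}$ and $\mathbb{1}_\infty$ is the identity on $\bigoplus_{m>j}V_m$. *)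

theory Defs
  imports "HOL-Analysis.Analysis"
begin

text \<open>A d x d matrix is a function
  nat => nat => complex of which only the entries with indices below d matter.
  An operator on l^2 is represented by its (infinite) matrix with respect to the
  canonical basis e_0, e_1, ...; a block matrix (blocks indexed by the subspaces
  V_m) is a function nat => nat => (d x d matrix).\<close>

type_synonym cmat = "nat \<Rightarrow> nat \<Rightarrow> complex"
type_synonym bmat = "nat \<Rightarrow> nat \<Rightarrow> cmat"

definition dmult :: "nat \<Rightarrow> cmat \<Rightarrow> cmat \<Rightarrow> cmat" where
  "dmult d A B = (\<lambda>i j. \<Sum>k<d. A i k * B k j)"

definition dadj :: "cmat \<Rightarrow> cmat" where
  "dadj A = (\<lambda>i j. cnj (A j i))"

definition did :: "cmat" where
  "did = (\<lambda>i j. if i = j then 1 else 0)"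

definition dminus :: "cmat \<Rightarrow> cmat \<Rightarrow> cmat" where
  "dminus A B = (\<lambda>i j. A i j - B i j)"

definition zblk :: "cmat" where
  "zblk = (\<lambda>i j. 0)"

definition vnorm :: "nat \<Rightarrow> (nat \<Rightarrow> complex) \<Rightarrow> real" where
  "vnorm d v = sqrt (\<Sum>k<d. (cmod (v k))\<^sup>2)"

definition mulv :: "nat \<Rightarrow> cmat \<Rightarrow> (nat \<Rightarrow> complex) \<Rightarrow> (nat \<Rightarrow> complex)" where
  "mulv d A v = (\<lambda>i. \<Sum>k<d. A i k * v k)"

definition opnorm :: "nat \<Rightarrow> cmat \<Rightarrow> real" where
  "opnorm d A = Sup ((\<lambda>v. vnorm d (mulv d A v)) ` {v. vnorm d v \<le> 1})"

definition hermitian :: "nat \<Rightarrow> cmat \<Rightarrow> bool" where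
  "hermitian d A \<longleftrightarrow> (\<forall>i<d. \<forall>j<d. A i j = cnj (A j i))"

definition psd :: "nat \<Rightarrow> cmat \<Rightarrow> bool" where
  "psd d A \<longleftrightarrow> hermitian d A \<and>
     (\<forall>v. 0 \<le> Re (\<Sum>i<d. cnj (v i) * mulv d A v i))"

text \<open>The positive semidefinite square root (entries outside d x d set to 0,
  which makes it unique).\<close>
definition msqrt :: "nat \<Rightarrow> cmat \<Rightarrow> cmat" where
  "msqrt d M = (THE S. (\<forall>i j. (d \<le> i \<or> d \<le> j) \<longrightarrow> S i j = 0) \<and> psd d S \<and>
                     (\<forall>i<d. \<forall>j<d. dmult d S S i j = M i j))"

definition rhoL :: "nat \<Rightarrow> cmat \<Rightarrow> cmat" where
  "rhoL d \<alpha> = msqrt d (dminus did (dmult d (dadj \<alpha>) \<alpha>))"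

definition rhoR :: "nat \<Rightarrow> cmat \<Rightarrow> cmat" where
  "rhoR d \<alpha> = msqrt d (dminus did (dmult d \<alpha> (dadj \<alpha>)))"

definition theta_blk :: "nat \<Rightarrow> cmat \<Rightarrow> nat \<Rightarrow> nat \<Rightarrow> cmat" where
  "theta_blk d \<alpha> s t =
     (if s = 0 \<and> t = 0 then dadj \<alpha>
      else if s = 0 then rhoL d \<alpha>
      else if t = 0 then rhoR d \<alpha>
      else (\<lambda>i j. - \<alpha> i j))"

text \<open>Scalar matrix of a block matrix: V_m = span{e_{md},...,e_{md+d-1}}.\<close>
definition scal :: "nat \<Rightarrow> bmat \<Rightarrow> cmat" where
  "scal d B = (\<lambda>p q. B (p div d) (q div d) (p mod d) (q mod d))"

definition mprod :: "cmat \<Rightarrow> cmat \<Rightarrow> cmat" where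
  "mprod A B = (\<lambda>p q. infsum (\<lambda>r. A p r * B r q) UNIV)"

definition ident :: "cmat" where
  "ident = (\<lambda>p q. if p = q then 1 else 0)"

text \<open>L = Theta(a_0) + Theta(a_2) + ..., M = 1 + Theta(a_1) + Theta(a_3) + ...\<close>
definition Lblk :: "nat \<Rightarrow> (nat \<Rightarrow> cmat) \<Rightarrow> bmat" where
  "Lblk d a = (\<lambda>m m'. if m div 2 = m' div 2
                  then theta_blk d (a (2 * (m div 2))) (m mod 2) (m' mod 2) else zblk)"

definition Mblk :: "nat \<Rightarrow> (nat \<Rightarrow> cmat) \<Rightarrow> bmat" where
  "Mblk d a = (\<lambda>m m'. if m = 0 \<and> m' = 0 then did
                  else if 1 \<le> m \<and> 1 \<le> m' \<and> (m - 1) div 2 = (m' - 1) div 2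
                  then theta_blk d (a (2 * ((m - 1) div 2) + 1)) ((m - 1) mod 2) ((m' - 1) mod 2)
                  else zblk)"

definition cmv :: "nat \<Rightarrow> (nat \<Rightarrow> cmat) \<Rightarrow> cmat" where
  "cmv d a = mprod (scal d (Lblk d a)) (scal d (Mblk d a))"

definition cmv_hat :: "nat \<Rightarrow> (nat \<Rightarrow> cmat) \<Rightarrow> cmat" where
  "cmv_hat d a = mprod (scal d (Mblk d a)) (scal d (Lblk d a))"

text \<open>Finite block CMV matrices on V_0 + ... + V_N (entries outside are 0).
  They only depend on a 0, ..., a (N-1).  L_N: for even N the last block is 1;
  M_N: for odd N the last block is 1.\<close>
definition Lfin :: "nat \<Rightarrow> (nat \<Rightarrow> cmat) \<Rightarrow> nat \<Rightarrow> bmat" where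
  "Lfin d a N = (\<lambda>m m'. if m \<le> N \<and> m' \<le> N then
                     (if m = N \<and> m' = N \<and> even N then did else Lblk d a m m')
                   else zblk)"

definition Mfin :: "nat \<Rightarrow> (nat \<Rightarrow> cmat) \<Rightarrow> nat \<Rightarrow> bmat" where
  "Mfin d a N = (\<lambda>m m'. if m \<le> N \<and> m' \<le> N then
                     (if m = N \<and> m' = N \<and> odd N then did else Mblk d a m m')
                   else zblk)"

definition cmv_fin :: "nat \<Rightarrow> (nat \<Rightarrow> cmat) \<Rightarrow> nat \<Rightarrow> cmat" where
  "cmv_fin d a N = mprod (scal d (Lfin d a N)) (scal d (Mfin d a N))"

definition cmv_hat_fin :: "nat \<Rightarrow> (nat \<Rightarrow> cmat) \<Rightarrow> nat \<Rightarrow> cmat" where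
  "cmv_hat_fin d a N = mprod (scal d (Mfin d a N)) (scal d (Lfin d a N))"

text \<open>1_j + X: identity on V_0 + ... + V_(j-1), X acting on V_j + V_(j+1) + ...\<close>
definition emb_lo :: "nat \<Rightarrow> nat \<Rightarrow> cmat \<Rightarrow> cmat" where
  "emb_lo d j X = (\<lambda>p q. if p < j * d \<or> q < j * d then ident p q
                          else X (p - j * d) (q - j * d))"

text \<open>X + 1_infinity: X acting on V_0 + ... + V_j, identity on V_(j+1) + ...\<close>
definition emb_hi :: "nat \<Rightarrow> nat \<Rightarrow> cmat \<Rightarrow> cmat" where
  "emb_hi d j X = (\<lambda>p q. if p < (j + 1) * d \<and> q < (j + 1) * d then X p q else ident p q)"

end

theory Submission
  imports Defs
begin


lemma infsum_fin:
  assumes "finite S" "\<And>r. r \<notin> S \<Longrightarrow> f r = (0::complex)"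
  shows "infsum f UNIV = sum f S"
proof -
  have "infsum f UNIV = infsum f S"
    by (rule infsum_cong_neutral) (use assms in auto)
  thus ?thesis using assms by simp
qed

lemma ident_left: "infsum (\<lambda>r. ident p r * B r q) UNIV = B p q"
  by (subst infsum_fin[of "{p}"]) (auto simp: ident_def)

lemma ident_right: "infsum (\<lambda>r. A p r * ident r q) UNIV = A p q"
  by (subst infsum_fin[of "{q}"]) (auto simp: ident_def)

definition rowfin :: "cmat \<Rightarrow> bool" where
  "rowfin A \<longleftrightarrow> (\<forall>p. finite {q. A p q \<noteq> 0})"

lemma mprod_sum:
  assumes "finite S" "\<And>r. r \<notin> S \<Longrightarrow> A p r = 0"
  shows "mprod A B p q = (\<Sum>r\<in>S. A p r * B r q)"
  unfolding mprod_def by (rule infsum_fin) (use assms in auto)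

lemma rowfin_mprod:
  assumes "rowfin A" "rowfin B" shows "rowfin (mprod A B)"
  unfolding rowfin_def
proof
  fix p
  let ?S = "{r. A p r \<noteq> 0}"
  let ?T = "\<Union>r\<in>?S. {s. B r s \<noteq> 0}"
  have fT: "finite ?T" using assms unfolding rowfin_def by auto
  have "{q. mprod A B p q \<noteq> 0} \<subseteq> ?T"
  proof
    fix q assume "q \<in> {q. mprod A B p q \<noteq> 0}"
    hence ne: "mprod A B p q \<noteq> 0" by simp
    have "mprod A B p q = (\<Sum>r\<in>?S. A p r * B r q)"
      by (rule mprod_sum) (use assms in \<open>auto simp: rowfin_def\<close>)
    with ne obtain r where "r \<in> ?S" "A p r * B r q \<noteq> 0"
      by (metis (no_types, lifting) sum.neutral)
    thus "q \<in> ?T" by auto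
  qed
  thus "finite {q. mprod A B p q \<noteq> 0}" using fT finite_subset by blast
qed

lemma mprod_assoc:
  assumes "rowfin A" "rowfin B"
  shows "mprod (mprod A B) C = mprod A (mprod B C)"
proof (intro ext)
  fix p q
  let ?S = "{r. A p r \<noteq> 0}"
  let ?T = "\<Union>r\<in>?S. {s. B r s \<noteq> 0}"
  have fS: "finite ?S" using assms unfolding rowfin_def by auto
  have fT: "finite ?T" using assms unfolding rowfin_def by auto
  have AB: "mprod A B p s = (\<Sum>r\<in>?S. A p r * B r s)" for s
    by (rule mprod_sum) (use fS in auto)
  have z: "mprod A B p s = 0" if "s \<notin> ?T" for s
    unfolding AB using that by (auto intro!: sum.neutral)
  have "mprod (mprod A B) C p q = (\<Sum>s\<in>?T. mprod A B p s * C s q)"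
    by (rule mprod_sum) (use fT z in auto)
  also have "\<dots> = (\<Sum>s\<in>?T. \<Sum>r\<in>?S. A p r * B r s * C s q)"
    by (simp add: AB sum_distrib_right)
  also have "\<dots> = (\<Sum>r\<in>?S. \<Sum>s\<in>?T. A p r * B r s * C s q)"
    by (rule sum.swap)
  also have "\<dots> = (\<Sum>r\<in>?S. A p r * mprod B C r q)"
  proof (rule sum.cong[OF refl])
    fix r assume r: "r \<in> ?S"
    have "mprod B C r q = (\<Sum>s\<in>?T. B r s * C s q)"
      by (rule mprod_sum) (use fT r in auto)
    thus "(\<Sum>s\<in>?T. A p r * B r s * C s q) = A p r * mprod B C r q"
      by (simp add: sum_distrib_left mult.assoc)
  qed
  also have "\<dots> = mprod A (mprod B C) p q"
    by (rule mprod_sum[symmetric]) (use fS in auto)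
  finally show "mprod (mprod A B) C p q = mprod A (mprod B C) p q" .
qed

lemma disj_prod:
  assumes hU: "\<And>p q. k \<le> p \<or> k \<le> q \<Longrightarrow> U p q = ident p q"
    and hW: "\<And>p q. p < k \<or> q < k \<Longrightarrow> W p q = ident p q"
  shows "mprod U W = (\<lambda>p q. if p < k then U p q else W p q)"
    and "mprod W U = (\<lambda>p q. if p < k then U p q else W p q)"
proof -
  show "mprod U W = (\<lambda>p q. if p < k then U p q else W p q)"
  proof (intro ext)
    fix p q
    show "mprod U W p q = (if p < k then U p q else W p q)"
    proof (cases "p < k")
      case True
      have "(\<lambda>r. U p r * W r q) = (\<lambda>r. U p r * ident r q)"
      proof
        fix r show "U p r * W r q = U p r * ident r q"
          using True hU[of p r] hW[of r q] by (cases "r < k") (auto simp: ident_def)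
      qed
      thus ?thesis using True by (simp add: mprod_def ident_right)
    next
      case False
      have "(\<lambda>r. U p r * W r q) = (\<lambda>r. ident p r * W r q)"
        using False hU by auto
      thus ?thesis using False by (simp add: mprod_def ident_left)
    qed
  qed
  show "mprod W U = (\<lambda>p q. if p < k then U p q else W p q)"
  proof (intro ext)
    fix p q
    show "mprod W U p q = (if p < k then U p q else W p q)"
    proof (cases "p < k")
      case True
      have "(\<lambda>r. W p r * U r q) = (\<lambda>r. ident p r * U r q)"
        using True hW by auto
      thus ?thesis using True by (simp add: mprod_def ident_left)
    next
      case False
      have "(\<lambda>r. W p r * U r q) = (\<lambda>r. W p r * ident r q)"
      proof
        fix r show "W p r * U r q = W p r * ident r q"
          using False hW[of p r] hU[of r q] by (cases "r < k") (auto simp: ident_def)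
      qed
      thus ?thesis using False by (simp add: mprod_def ident_right)
    qed
  qed
qed

lemma emb_hi_mprod:
  assumes hX: "\<And>p q. (j+1)*d \<le> p \<or> (j+1)*d \<le> q \<Longrightarrow> X p q = 0"
  shows "mprod (emb_hi d j X) (emb_hi d j Y) = emb_hi d j (mprod X Y)"
proof (intro ext)
  fix p q
  let ?N = "(j+1)*d"
  show "mprod (emb_hi d j X) (emb_hi d j Y) p q = emb_hi d j (mprod X Y) p q"
  proof (cases "p < ?N")
    case p: True
    show ?thesis
    proof (cases "q < ?N")
      case q: True
      have "(\<lambda>r. emb_hi d j X p r * emb_hi d j Y r q) = (\<lambda>r. X p r * Y r q)"
        using p q hX by (auto simp: emb_hi_def ident_def)
      thus ?thesis using p q by (simp add: mprod_def emb_hi_def)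
    next
      case q: False
      have "(\<lambda>r. emb_hi d j X p r * emb_hi d j Y r q) = (\<lambda>r. emb_hi d j X p r * ident r q)"
        using p q by (auto simp: emb_hi_def)
      thus ?thesis using p q by (simp add: mprod_def ident_right) (simp add: emb_hi_def)
    qed
  next
    case p: False
    have "(\<lambda>r. emb_hi d j X p r * emb_hi d j Y r q) = (\<lambda>r. ident p r * emb_hi d j Y r q)"
      using p by (auto simp: emb_hi_def)
    thus ?thesis using p by (simp add: mprod_def ident_left) (simp add: emb_hi_def)
  qed
qed

lemma emb_lo_mprod:
  "mprod (emb_lo d j X) (emb_lo d j Y) = emb_lo d j (mprod X Y)"
proof (intro ext)
  fix p q
  let ?k = "j*d"
  show "mprod (emb_lo d j X) (emb_lo d j Y) p q = emb_lo d j (mprod X Y) p q"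
  proof (cases "p < ?k")
    case p: True
    have "(\<lambda>r. emb_lo d j X p r * emb_lo d j Y r q) = (\<lambda>r. ident p r * emb_lo d j Y r q)"
      using p by (auto simp: emb_lo_def)
    thus ?thesis using p by (simp add: mprod_def ident_left) (simp add: emb_lo_def)
  next
    case p: False
    show ?thesis
    proof (cases "q < ?k")
      case q: True
      have "(\<lambda>r. emb_lo d j X p r * emb_lo d j Y r q) = (\<lambda>r. emb_lo d j X p r * ident r q)"
        using q by (auto simp: emb_lo_def)
      thus ?thesis using p q by (simp add: mprod_def ident_right) (simp add: emb_lo_def)
    next
      case q: False
      let ?f = "\<lambda>r. emb_lo d j X p r * emb_lo d j Y r q"
      have "infsum ?f UNIV = infsum ?f {?k..}"
        by (rule infsum_cong_neutral) (use p in \<open>auto simp: emb_lo_def ident_def\<close>)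
      also have "{?k..} = (\<lambda>r. r + ?k) ` UNIV"
        by (auto simp: image_iff) (metis le_add_diff_inverse2)
      also have "infsum ?f \<dots> = infsum (?f \<circ> (\<lambda>r. r + ?k)) UNIV"
        by (rule infsum_reindex) (auto simp: inj_on_def)
      also have "?f \<circ> (\<lambda>r. r + ?k) = (\<lambda>r. X (p - ?k) r * Y r (q - ?k))"
        using p q by (auto simp: emb_lo_def)
      finally show ?thesis using p q by (simp add: mprod_def emb_lo_def)
    qed
  qed
qed


lemma blk_ext:
  fixes d :: nat and F G :: cmat
  assumes "0 < d" "\<And>m i m' i'. i < d \<Longrightarrow> i' < d \<Longrightarrow> F (m*d+i) (m'*d+i') = G (m*d+i) (m'*d+i')"
  shows "F = G"
proof (intro ext)
  fix p q
  have "F ((p div d)*d + p mod d) ((q div d)*d + q mod d) = G ((p div d)*d + p mod d) ((q div d)*d + q mod d)"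
    using assms(2)[of "p mod d" "q mod d" "p div d" "q div d"] assms(1) by simp
  thus "F p q = G p q" by simp
qed
lemma bd_div[simp]: "i < (d::nat) \<Longrightarrow> (m*d+i) div d = m" by simp
lemma bd_mod[simp]: "i < (d::nat) \<Longrightarrow> (m*d+i) mod d = i" by simp
lemma bd_lt[simp]: "i < (d::nat) \<Longrightarrow> (m*d+i < k*d) = (m < k)"
  by (metis add_lessD1 bd_div div_less_iff_less_mult gr_implies_not0 linorder_neqE_nat mult_less_cancel2)
lemma bd_lt1[simp]: "i < (d::nat) \<Longrightarrow> (m*d+i < (k+1)*d) = (m \<le> k)"
  using bd_lt[of i d m "k+1"] by (simp add: less_Suc_eq_le)
lemma bd_lt1'[simp]: "i < (d::nat) \<Longrightarrow> (m*d+i < d + k*d) = (m \<le> k)"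
  using bd_lt1[of i d m k] by (simp add: algebra_simps)
lemma bd_sub[simp]: "(k::nat) \<le> m \<Longrightarrow> m*d+i - k*d = (m-k)*d+i"
  by (simp add: diff_mult_distrib)
lemma bd_ident[simp]: "i < d \<Longrightarrow> i' < d \<Longrightarrow> ident (m*d+i) (m'*d+i') = (if m = m' \<and> i = i' then 1 else 0)"
  unfolding ident_def by (metis bd_div bd_mod)




lemma D1: "((x::nat) div 2 < t) = (x < 2*t)" using div_less_iff_less_mult[of 2 x t] by (simp add: mult.commute)
lemma D2: "(t \<le> (x::nat) div 2) = (2*t \<le> x)" using D1[of x t] by linarith
lemma A1: "(m::nat) < 2*t \<Longrightarrow> 2*t < m' \<Longrightarrow> m div 2 \<noteq> m' div 2" using D1[of m t] D2[of t m'] by linarith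
lemma A2: "2*t \<le> (m::nat) \<Longrightarrow> m' < 2*t \<Longrightarrow> m div 2 \<noteq> m' div 2" using D1[of m' t] D2[of t m] by linarith
lemma A3: "(m::nat) \<le> 2*t \<Longrightarrow> 2*t < m' \<Longrightarrow> (m-1) div 2 \<noteq> (m'-1) div 2 \<or> m = 0"
  using D1[of "m-1" t] D2[of t "m'-1"] by linarith
lemma A4: "2*t < (m::nat) \<Longrightarrow> m' \<le> 2*t \<Longrightarrow> (m-1) div 2 \<noteq> (m'-1) div 2 \<or> m' = 0"
  using D1[of "m'-1" t] D2[of t "m-1"] by linarith
lemma A5: "(m::nat) \<le> 2*t+1 \<Longrightarrow> 2*t+1 < m' \<Longrightarrow> m div 2 \<noteq> m' div 2"
  using D1[of m "t+1"] D2[of "t+1" m'] by linarith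
lemma A6: "2*t+1 < (m::nat) \<Longrightarrow> m' \<le> 2*t+1 \<Longrightarrow> m div 2 \<noteq> m' div 2"
  using D1[of m' "t+1"] D2[of "t+1" m] by linarith
lemma A7: "(m::nat) < 2*t+1 \<Longrightarrow> 2*t+1 < m' \<Longrightarrow> (m-1) div 2 \<noteq> (m'-1) div 2 \<or> m = 0"
  using D1[of "m-1" t] D2[of t "m'-1"] by linarith
lemma A8: "2*t+1 \<le> (m::nat) \<Longrightarrow> m' < 2*t+1 \<Longrightarrow> (m-1) div 2 \<noteq> (m'-1) div 2 \<or> m' = 0"
  using D1[of "m'-1" t] D2[of t "m-1"] by linarith
lemma A9: "(m::nat) \<noteq> m' \<Longrightarrow> m \<le> 2*t \<Longrightarrow> m' \<le> 2*t \<Longrightarrow> 2*t \<le> m \<or> 2*t \<le> m' \<Longrightarrow> m div 2 \<noteq> m' div 2"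
  using A2[of t m m'] A2[of t m' m] by linarith
lemma A10: "(m::nat) \<noteq> m' \<Longrightarrow> m \<le> 2*t+1 \<Longrightarrow> m' \<le> 2*t+1 \<Longrightarrow> 2*t+1 \<le> m \<or> 2*t+1 \<le> m' \<Longrightarrow> (m-1) div 2 \<noteq> (m'-1) div 2 \<or> m = 0 \<or> m' = 0"
  using A8[of t m m'] A8[of t m' m] by linarith
lemma E1: "1 \<le> (x::nat) \<Longrightarrow> (2*t+x-1) div 2 = t + (x-1) div 2"
proof - assume "1 \<le> x" hence "2*t+x-1 = (x-1) + t*2" by simp thus ?thesis by simp qed
lemma E2: "1 \<le> (x::nat) \<Longrightarrow> (2*t+x-1) mod 2 = (x-1) mod 2"
proof - assume "1 \<le> x" hence "2*t+x-1 = (x-1) + t*2" by simp thus ?thesis by simp qed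
lemma E3: "1 \<le> (x::nat) \<Longrightarrow> (2*t+1+x) div 2 = t + 1 + (x-1) div 2"
proof - assume "1 \<le> x" hence "2*t+1+x = (x-1) + (t+1)*2" by simp thus ?thesis by simp qed
lemma E4: "1 \<le> (x::nat) \<Longrightarrow> (2*t+1+x) mod 2 = (x-1) mod 2"
proof - assume "1 \<le> x" hence e: "2*t+1+x = (x-1) + (t+1)*2" by simp show ?thesis by (simp only: e mod_mult_self1) qed

lemma Lblk_zero: "m div 2 \<noteq> m' div 2 \<Longrightarrow> Lblk d a m m' = zblk"
  unfolding Lblk_def by simp

lemma Mblk_zero: "\<not>(m=0 \<and> m'=0) \<Longrightarrow> (m = 0 \<or> m' = 0 \<or> (m-1) div 2 \<noteq> (m'-1) div 2) \<Longrightarrow> Mblk d a m m' = zblk"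
  unfolding Mblk_def by auto

lemma Lblk_even:
  assumes "j = 2*t"
  shows "Lblk d a m m' = (if m < j then (if m' \<le> j then Lfin d a j m m' else zblk)
     else if m' < j then zblk else Lblk d (\<lambda>n. a (n+j)) (m-j) (m'-j))"
proof (cases "m < j")
  case True
  show ?thesis
  proof (cases "m' \<le> j")
    case True
    thus ?thesis using \<open>m < j\<close> by (simp add: Lfin_def)
  next
    case False
    have "m div 2 \<noteq> m' div 2" using A1[of m t m'] \<open>m < j\<close> False assms by simp
    thus ?thesis using \<open>m < j\<close> False by (simp add: Lblk_zero)
  qed
next
  case False
  then obtain x where x: "m = 2*t + x" using assms by (intro that[of "m - 2*t"]) auto
  show ?thesis
  proof (cases "m' < j")
    case True
    have "m div 2 \<noteq> m' div 2" using A2[of t m m'] x True assms by simp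
    thus ?thesis using False True by (simp add: Lblk_zero)
  next
    case True2: False
    then obtain y where y: "m' = 2*t + y" using assms by (intro that[of "m' - 2*t"]) auto
    have "Lblk d a m m' = Lblk d (\<lambda>n. a (n+j)) x y"
      unfolding Lblk_def x y assms by (simp add: add.commute)
    thus ?thesis using False True2 x y assms by simp
  qed
qed

lemma Lfin_even_id:
  assumes "j = 2*t" "m \<le> j" "m' \<le> j" "j \<le> m \<or> j \<le> m'"
  shows "Lfin d a j m m' = (if m = m' then did else zblk)"
proof (cases "m = m'")
  case True
  hence "m = j" "m' = j" using assms by auto
  thus ?thesis using assms by (simp add: Lfin_def)
next
  case False
  hence "m div 2 \<noteq> m' div 2" using A9[of m m' t] assms by simp
  hence "Lblk d a m m' = zblk" by (rule Lblk_zero)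
  thus ?thesis using False assms(2,3) by (cases "m = j") (simp_all add: Lfin_def)
qed

lemma Mblk_even:
  assumes "j = 2*t"
  shows "Mblk d a m m' = (if m \<le> j then (if m' \<le> j then Mfin d a j m m' else zblk)
     else if m' \<le> j then zblk else Mblk d (\<lambda>n. a (n+j)) (m-j) (m'-j))"
proof (cases "m \<le> j")
  case True
  show ?thesis
  proof (cases "m' \<le> j")
    case True
    thus ?thesis using \<open>m \<le> j\<close> assms by (simp add: Mfin_def)
  next
    case False
    have "(m - 1) div 2 \<noteq> (m' - 1) div 2 \<or> m = 0" using A3[of m t m'] \<open>m \<le> j\<close> False assms by simp
    hence "Mblk d a m m' = zblk" using False by (intro Mblk_zero) auto
    thus ?thesis using \<open>m \<le> j\<close> False by simp
  qed
next
  case False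
  then obtain x where x: "m = 2*t + x" "1 \<le> x" using assms by (intro that[of "m - (2*t)"]) auto
  show ?thesis
  proof (cases "m' \<le> j")
    case True
    have "(m - 1) div 2 \<noteq> (m' - 1) div 2 \<or> m' = 0" using A4[of t m m'] x True assms by simp
    hence "Mblk d a m m' = zblk" using x by (intro Mblk_zero) auto
    thus ?thesis using False True by simp
  next
    case True2: False
    then obtain y where y: "m' = 2*t + y" "1 \<le> y" using assms by (intro that[of "m' - (2*t)"]) auto
    have e1: "(2*t+x-1) div 2 = t + (x-1) div 2" "(2*t+y-1) div 2 = t + (y-1) div 2"
      "(2*t+x-1) mod 2 = (x-1) mod 2" "(2*t+y-1) mod 2 = (y-1) mod 2"
      using x y E1 E2 by blast+
    have e2: "2 * (t + (x-1) div 2) + 1 = 2 * ((x-1) div 2) + 1 + 2*t" by simp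
    have "Mblk d a m m' = Mblk d (\<lambda>n. a (n+j)) x y"
      unfolding Mblk_def x(1) y(1) assms e1 e2 using x(2) y(2) by simp
    thus ?thesis using False True2 x y assms by simp
  qed
qed

lemma Mblk_0_id:
  assumes "m = 0 \<or> m' = 0"
  shows "Mblk d b m m' = (if m = m' then did else zblk)"
  using assms by (auto simp: Mblk_def)

lemma Lblk_odd:
  assumes "j = 2*t+1"
  shows "Lblk d a m m' = (if m \<le> j then (if m' \<le> j then Lfin d a j m m' else zblk)
     else if m' \<le> j then zblk else Mblk d (\<lambda>n. a (n+j)) (m-j) (m'-j))"
proof (cases "m \<le> j")
  case True
  show ?thesis
  proof (cases "m' \<le> j")
    case True
    thus ?thesis using \<open>m \<le> j\<close> assms by (simp add: Lfin_def)
  next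
    case False
    have "m div 2 \<noteq> m' div 2" using A5[of m t m'] \<open>m \<le> j\<close> False assms by simp
    thus ?thesis using \<open>m \<le> j\<close> False by (simp add: Lblk_zero)
  qed
next
  case False
  then obtain x where x: "m = 2*t + 1 + x" "1 \<le> x" using assms
    by (intro that[of "m - (2*t+1)"]) auto
  show ?thesis
  proof (cases "m' \<le> j")
    case True
    have "m div 2 \<noteq> m' div 2" using A6[of t m m'] x True assms by simp
    thus ?thesis using False True by (simp add: Lblk_zero)
  next
    case True2: False
    then obtain y where y: "m' = 2*t + 1 + y" "1 \<le> y" using assms
      by (intro that[of "m' - (2*t+1)"]) auto
    have e1: "(2*t+1+x) div 2 = t + 1 + (x-1) div 2" "(2*t+1+y) div 2 = t + 1 + (y-1) div 2"
      "(2*t+1+x) mod 2 = (x-1) mod 2" "(2*t+1+y) mod 2 = (y-1) mod 2"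
      using x y E3 E4 by blast+
    have e2: "2 * (t + 1 + (x-1) div 2) = 2 * ((x - 1) div 2) + 1 + (2*t+1)" by simp
    have "Lblk d a m m' = Mblk d (\<lambda>n. a (n+j)) x y"
      unfolding Lblk_def Mblk_def x(1) y(1) assms e1 e2 using x(2) y(2) by simp
    thus ?thesis using False True2 x y assms by simp
  qed
qed

lemma Mblk_odd:
  assumes "j = 2*t+1"
  shows "Mblk d a m m' = (if m < j then (if m' \<le> j then Mfin d a j m m' else zblk)
     else if m' < j then zblk else Lblk d (\<lambda>n. a (n+j)) (m-j) (m'-j))"
proof (cases "m < j")
  case True
  show ?thesis
  proof (cases "m' \<le> j")
    case True
    thus ?thesis using \<open>m < j\<close> assms by (simp add: Mfin_def)
  next
    case False
    have "(m - 1) div 2 \<noteq> (m' - 1) div 2 \<or> m = 0" using A7[of m t m'] \<open>m < j\<close> False assms by simp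
    hence "Mblk d a m m' = zblk" using False by (intro Mblk_zero) auto
    thus ?thesis using \<open>m < j\<close> False by simp
  qed
next
  case False
  then obtain x where x: "m = 2*t + 1 + x" using assms by (intro that[of "m - (2*t+1)"]) auto
  show ?thesis
  proof (cases "m' < j")
    case True
    have "(m - 1) div 2 \<noteq> (m' - 1) div 2 \<or> m' = 0" using A8[of t m m'] x True assms by simp
    hence "Mblk d a m m' = zblk" using x by (intro Mblk_zero) auto
    thus ?thesis using False True by simp
  next
    case True2: False
    then obtain y where y: "m' = 2*t + 1 + y" using assms by (intro that[of "m' - (2*t+1)"]) auto
    have "Mblk d a m m' = Lblk d (\<lambda>n. a (n+j)) x y"
      unfolding Lblk_def Mblk_def x(1) y(1) assms by (simp add: add.commute)
    thus ?thesis using False True2 x y assms by simp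
  qed
qed

lemma Mfin_odd_id:
  assumes "j = 2*t+1" "m \<le> j" "m' \<le> j" "j \<le> m \<or> j \<le> m'"
  shows "Mfin d a j m m' = (if m = m' then did else zblk)"
proof (cases "m = m'")
  case True
  hence "m = j" "m' = j" using assms by auto
  thus ?thesis using assms by (simp add: Mfin_def)
next
  case False
  hence "(m - 1) div 2 \<noteq> (m' - 1) div 2 \<or> m = 0 \<or> m' = 0" using A10[of m m' t] assms by simp
  hence "Mblk d a m m' = zblk" using False by (intro Mblk_zero) auto
  thus ?thesis using False assms(2,3) by (cases "m = j") (simp_all add: Mfin_def)
qed



lemma blk_all:
  fixes d :: nat
  assumes "0 < d" "\<And>m i m' i'. i < d \<Longrightarrow> i' < d \<Longrightarrow> P (m*d+i) (m'*d+i')"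
  shows "P p q"
proof -
  have "P ((p div d)*d + p mod d) ((q div d)*d + q mod d)"
    using assms(2)[of "p mod d" "q mod d" "p div d" "q div d"] assms(1) by simp
  thus ?thesis by simp
qed

lemma scal_bd[simp]: "i < d \<Longrightarrow> i' < d \<Longrightarrow> scal d B (m*d+i) (m'*d+i') = B m m' i i'"
  by (simp add: scal_def)

lemma emb_hi_bd: "i < d \<Longrightarrow> i' < d \<Longrightarrow> emb_hi d j X (m*d+i) (m'*d+i') =
   (if m \<le> j \<and> m' \<le> j then X (m*d+i) (m'*d+i') else (if m = m' \<and> i = i' then 1 else 0))"
  by (simp add: emb_hi_def)

lemma emb_lo_bd: "i < d \<Longrightarrow> i' < d \<Longrightarrow> emb_lo d j X (m*d+i) (m'*d+i') =
   (if m < j \<or> m' < j then (if m = m' \<and> i = i' then 1 else 0) else X ((m-j)*d+i) ((m'-j)*d+i'))"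
  by (simp add: emb_lo_def)

lemma emb_hi_id: "(j+1)*d \<le> p \<or> (j+1)*d \<le> q \<Longrightarrow> emb_hi d j X p q = ident p q"
  by (auto simp: emb_hi_def)

lemma emb_lo_id: "p < j*d \<or> q < j*d \<Longrightarrow> emb_lo d j X p q = ident p q"
  by (auto simp: emb_lo_def)

lemma Lfin_supp:
  assumes "0 < d" "(j+1)*d \<le> p \<or> (j+1)*d \<le> q" shows "scal d (Lfin d a j) p q = 0"
proof -
  have "(j+1)*d \<le> p \<longrightarrow> scal d (Lfin d a j) p q = 0" "(j+1)*d \<le> q \<longrightarrow> scal d (Lfin d a j) p q = 0"
    by (rule blk_all[OF assms(1)], simp add: Lfin_def zblk_def not_less[symmetric] del: not_less)+
  thus ?thesis using assms(2) by blast
qed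

lemma Mfin_supp:
  assumes "0 < d" "(j+1)*d \<le> p \<or> (j+1)*d \<le> q" shows "scal d (Mfin d a j) p q = 0"
proof -
  have "(j+1)*d \<le> p \<longrightarrow> scal d (Mfin d a j) p q = 0" "(j+1)*d \<le> q \<longrightarrow> scal d (Mfin d a j) p q = 0"
    by (rule blk_all[OF assms(1)], simp add: Mfin_def zblk_def not_less[symmetric] del: not_less)+
  thus ?thesis using assms(2) by blast
qed


lemma mprod_chain:
  assumes "rowfin A" "rowfin B" "rowfin C" "rowfin D"
    and "mprod (mprod B C) D = mprod D (mprod B C)"
  shows "mprod (mprod A B) (mprod C D) = mprod (mprod A D) (mprod B C)"
proof -
  have "mprod (mprod A B) (mprod C D) = mprod A (mprod B (mprod C D))"
    using mprod_assoc[OF assms(1,2)] by simp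
  also have "mprod B (mprod C D) = mprod (mprod B C) D" using mprod_assoc[OF assms(2,3)] by simp
  also have "\<dots> = mprod D (mprod B C)" by (rule assms(5))
  also have "mprod A (mprod D (mprod B C)) = mprod (mprod A D) (mprod B C)"
    using mprod_assoc[OF assms(1,4)] by simp
  finally show ?thesis .
qed

lemma rowfin_bound: "(\<And>p q. f p \<le> q \<Longrightarrow> A p q = 0) \<Longrightarrow> rowfin A"
  unfolding rowfin_def
proof
  fix p assume h: "\<And>p q. f p \<le> q \<Longrightarrow> A p q = 0"
  have "{q. A p q \<noteq> 0} \<subseteq> {..< f p}" using h by (force simp: not_less[symmetric])
  thus "finite {q. A p q \<noteq> 0}" using finite_subset by blast
qed

lemma rowfin_emb_hi: "rowfin (emb_hi d j X)"
  unfolding rowfin_def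
proof
  fix p
  have "{q. emb_hi d j X p q \<noteq> 0} \<subseteq> {..< (j+1)*d} \<union> {p}"
    by (auto simp: emb_hi_def ident_def)
  thus "finite {q. emb_hi d j X p q \<noteq> 0}" using finite_subset by blast
qed

lemma rowfin_emb_lo: assumes "rowfin X" shows "rowfin (emb_lo d j X)"
  unfolding rowfin_def
proof
  fix p
  have "{q. emb_lo d j X p q \<noteq> 0} \<subseteq> {..< j*d} \<union> {p} \<union> (\<lambda>r. r + j*d) ` {q. X (p - j*d) q \<noteq> 0}"
  proof
    fix q assume "q \<in> {q. emb_lo d j X p q \<noteq> 0}"
    thus "q \<in> {..< j*d} \<union> {p} \<union> (\<lambda>r. r + j*d) ` {q. X (p - j*d) q \<noteq> 0}"
      by (cases "q < j*d") (auto simp: emb_lo_def ident_def image_iff split: if_splits intro!: exI[of _ "q - j*d"])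
  qed
  moreover have "finite ({..< j*d} \<union> {p} \<union> (\<lambda>r. r + j*d) ` {q. X (p - j*d) q \<noteq> 0})"
    using assms unfolding rowfin_def by auto
  ultimately show "finite {q. emb_lo d j X p q \<noteq> 0}" using finite_subset by blast
qed

lemma rowfin_L: assumes "0 < d" shows "rowfin (scal d (Lblk d a))"
proof (rule rowfin_bound[of "\<lambda>p. (p div d + 2) * d"])
  fix p q assume "(p div d + 2) * d \<le> q"
  hence "p div d + 2 \<le> q div d" using assms
    by (metis div_le_mono nonzero_mult_div_cancel_right not_gr0)
  hence "p div d div 2 \<noteq> q div d div 2" by linarith
  thus "scal d (Lblk d a) p q = 0" by (simp add: scal_def Lblk_zero zblk_def)
qed

lemma rowfin_M: assumes "0 < d" shows "rowfin (scal d (Mblk d a))"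
proof (rule rowfin_bound[of "\<lambda>p. (p div d + 2) * d"])
  fix p q assume "(p div d + 2) * d \<le> q"
  hence h: "p div d + 2 \<le> q div d" using assms
    by (metis div_le_mono nonzero_mult_div_cancel_right not_gr0)
  hence "(p div d - 1) div 2 \<noteq> (q div d - 1) div 2 \<or> p div d = 0" by linarith
  hence "Mblk d a (p div d) (q div d) = zblk" using h by (intro Mblk_zero) auto
  thus "scal d (Mblk d a) p q = 0" by (simp add: scal_def zblk_def)
qed


lemma Lsplit_even:
  assumes "j = 2*t" "0 < d"
  shows "scal d (Lblk d a) = (\<lambda>p q. if p < j*d then emb_hi d j (scal d (Lfin d a j)) p q
            else emb_lo d j (scal d (Lblk d (\<lambda>n. a (n+j)))) p q)"
proof (rule blk_ext[OF assms(2)])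
  fix m i m' i' assume i: "i < d" "i' < d"
  note e = Lblk_even[OF assms(1), of d a m m']
  show "scal d (Lblk d a) (m*d+i) (m'*d+i') = (if m*d+i < j*d then emb_hi d j (scal d (Lfin d a j)) (m*d+i) (m'*d+i')
            else emb_lo d j (scal d (Lblk d (\<lambda>n. a (n+j)))) (m*d+i) (m'*d+i'))"
    using i Mblk_0_id[of "m-j" 0 d "\<lambda>n. a (n+j)"] by (simp add: emb_hi_bd emb_lo_bd e zblk_def scal_def)
qed

lemma Msplit_even:
  assumes "j = 2*t" "0 < d"
  shows "scal d (Mblk d a) = (\<lambda>p q. if p < (j+1)*d then emb_hi d j (scal d (Mfin d a j)) p q
            else emb_lo d j (scal d (Mblk d (\<lambda>n. a (n+j)))) p q)"
proof (rule blk_ext[OF assms(2)])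
  fix m i m' i' assume i: "i < d" "i' < d"
  note e = Mblk_even[OF assms(1), of d a m m']
  show "scal d (Mblk d a) (m*d+i) (m'*d+i') = (if m*d+i < (j+1)*d then emb_hi d j (scal d (Mfin d a j)) (m*d+i) (m'*d+i')
            else emb_lo d j (scal d (Mblk d (\<lambda>n. a (n+j)))) (m*d+i) (m'*d+i'))"
    using i Mblk_0_id[of "m-j" 0 d "\<lambda>n. a (n+j)"] by (simp add: emb_hi_bd emb_lo_bd e zblk_def scal_def)
qed

lemma Lsplit_odd:
  assumes "j = 2*t+1" "0 < d"
  shows "scal d (Lblk d a) = (\<lambda>p q. if p < (j+1)*d then emb_hi d j (scal d (Lfin d a j)) p q
            else emb_lo d j (scal d (Mblk d (\<lambda>n. a (n+j)))) p q)"
proof (rule blk_ext[OF assms(2)])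
  fix m i m' i' assume i: "i < d" "i' < d"
  note e = Lblk_odd[OF assms(1), of d a m m']
  show "scal d (Lblk d a) (m*d+i) (m'*d+i') = (if m*d+i < (j+1)*d then emb_hi d j (scal d (Lfin d a j)) (m*d+i) (m'*d+i')
            else emb_lo d j (scal d (Mblk d (\<lambda>n. a (n+j)))) (m*d+i) (m'*d+i'))"
    using i Mblk_0_id[of "m-j" 0 d "\<lambda>n. a (n+j)"] by (simp add: emb_hi_bd emb_lo_bd e zblk_def scal_def)
qed

lemma Msplit_odd:
  assumes "j = 2*t+1" "0 < d"
  shows "scal d (Mblk d a) = (\<lambda>p q. if p < j*d then emb_hi d j (scal d (Mfin d a j)) p q
            else emb_lo d j (scal d (Lblk d (\<lambda>n. a (n+j)))) p q)"
proof (rule blk_ext[OF assms(2)])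
  fix m i m' i' assume i: "i < d" "i' < d"
  note e = Mblk_odd[OF assms(1), of d a m m']
  show "scal d (Mblk d a) (m*d+i) (m'*d+i') = (if m*d+i < j*d then emb_hi d j (scal d (Mfin d a j)) (m*d+i) (m'*d+i')
            else emb_lo d j (scal d (Lblk d (\<lambda>n. a (n+j)))) (m*d+i) (m'*d+i'))"
    using i Mblk_0_id[of "m-j" 0 d "\<lambda>n. a (n+j)"] by (simp add: emb_hi_bd emb_lo_bd e zblk_def scal_def)
qed

lemma UL_even:
  assumes "j = 2*t" "0 < d" "j*d \<le> p \<or> j*d \<le> q"
  shows "emb_hi d j (scal d (Lfin d a j)) p q = ident p q"
proof -
  have "j*d \<le> p \<or> j*d \<le> q \<longrightarrow> emb_hi d j (scal d (Lfin d a j)) p q = ident p q"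
  proof (rule blk_all[OF assms(2)])
    fix m i m' i' assume i: "i < d" "i' < d"
    show "j*d \<le> m*d+i \<or> j*d \<le> m'*d+i' \<longrightarrow> emb_hi d j (scal d (Lfin d a j)) (m*d+i) (m'*d+i') = ident (m*d+i) (m'*d+i')"
      using i Lfin_even_id[OF assms(1), of m m' d a]
      by (auto simp: emb_hi_bd not_less[symmetric] did_def zblk_def simp del: not_less)
  qed
  thus ?thesis using assms(3) by blast
qed

lemma UM_odd:
  assumes "j = 2*t+1" "0 < d" "j*d \<le> p \<or> j*d \<le> q"
  shows "emb_hi d j (scal d (Mfin d a j)) p q = ident p q"
proof -
  have "j*d \<le> p \<or> j*d \<le> q \<longrightarrow> emb_hi d j (scal d (Mfin d a j)) p q = ident p q"
  proof (rule blk_all[OF assms(2)])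
    fix m i m' i' assume i: "i < d" "i' < d"
    show "j*d \<le> m*d+i \<or> j*d \<le> m'*d+i' \<longrightarrow> emb_hi d j (scal d (Mfin d a j)) (m*d+i) (m'*d+i') = ident (m*d+i) (m'*d+i')"
      using i Mfin_odd_id[OF assms(1), of m m' d a]
      by (auto simp: emb_hi_bd not_less[symmetric] did_def zblk_def simp del: not_less)
  qed
  thus ?thesis using assms(3) by blast
qed

lemma WM_id:
  assumes "0 < d" "p < (j+1)*d \<or> q < (j+1)*d"
  shows "emb_lo d j (scal d (Mblk d b)) p q = ident p q"
proof -
  have "p < (j+1)*d \<or> q < (j+1)*d \<longrightarrow> emb_lo d j (scal d (Mblk d b)) p q = ident p q"
  proof (rule blk_all[OF assms(1)])
    fix m i m' i' assume i: "i < d" "i' < d"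
    show "m*d+i < (j+1)*d \<or> m'*d+i' < (j+1)*d \<longrightarrow> emb_lo d j (scal d (Mblk d b)) (m*d+i) (m'*d+i') = ident (m*d+i) (m'*d+i')"
      using i Mblk_0_id[of "m-j" "m'-j" d b]
      by (auto simp: emb_lo_bd did_def zblk_def scal_def)
  qed
  thus ?thesis using assms(2) by blast
qed



theorem proposition4p1:
  fixes d :: nat and a :: "nat \<Rightarrow> cmat" and j :: nat
  assumes "1 \<le> d"
    and "\<forall>i. opnorm d (a i) < 1"
  shows "cmv d a =
           (if even j
            then mprod (emb_lo d j (cmv d (\<lambda>n. a (n + j)))) (emb_hi d j (cmv_fin d a j))
            else mprod (emb_hi d j (cmv_fin d a j)) (emb_lo d j (cmv_hat d (\<lambda>n. a (n + j)))))
       \<and> cmv_hat d a =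
           (if even j
            then mprod (emb_hi d j (cmv_hat_fin d a j)) (emb_lo d j (cmv_hat d (\<lambda>n. a (n + j))))
            else mprod (emb_lo d j (cmv d (\<lambda>n. a (n + j)))) (emb_hi d j (cmv_hat_fin d a j)))"
proof -
  have d: "0 < d" using assms(1) by simp
  define a' where "a' = (\<lambda>n. a (n + j))"
  define L where "L = scal d (Lblk d a)"
  define M where "M = scal d (Mblk d a)"
  define L' where "L' = scal d (Lblk d a')"
  define M' where "M' = scal d (Mblk d a')"
  define Lj where "Lj = scal d (Lfin d a j)"
  define Mj where "Mj = scal d (Mfin d a j)"
  define UL where "UL = emb_hi d j Lj"
  define UM where "UM = emb_hi d j Mj"
  have rf: "rowfin UL" "rowfin UM" "rowfin (emb_lo d j L')" "rowfin (emb_lo d j M')"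
    unfolding UL_def UM_def L'_def M'_def
    by (auto intro!: rowfin_emb_hi rowfin_emb_lo rowfin_L rowfin_M d)
  have hiLM: "emb_hi d j (cmv_fin d a j) = mprod UL UM"
    unfolding cmv_fin_def UL_def UM_def Lj_def Mj_def
    by (rule emb_hi_mprod[symmetric]) (rule Lfin_supp[OF d])
  have hiML: "emb_hi d j (cmv_hat_fin d a j) = mprod UM UL"
    unfolding cmv_hat_fin_def UL_def UM_def Lj_def Mj_def
    by (rule emb_hi_mprod[symmetric]) (rule Mfin_supp[OF d])
  have loLM: "emb_lo d j (cmv d a') = mprod (emb_lo d j L') (emb_lo d j M')"
    unfolding cmv_def L'_def M'_def by (rule emb_lo_mprod[symmetric])
  have loML: "emb_lo d j (cmv_hat d a') = mprod (emb_lo d j M') (emb_lo d j L')"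
    unfolding cmv_hat_def L'_def M'_def by (rule emb_lo_mprod[symmetric])
  have C: "cmv d a = mprod L M" unfolding cmv_def L_def M_def ..
  have Ch: "cmv_hat d a = mprod M L" unfolding cmv_hat_def L_def M_def ..
  have hiid: "\<And>X p q. (j+1)*d \<le> p \<or> (j+1)*d \<le> q \<Longrightarrow> emb_hi d j X p q = ident p q"
    by (rule emb_hi_id)
  have loid: "\<And>X p q. p < j*d \<or> q < j*d \<Longrightarrow> emb_lo d j X p q = ident p q"
    by (rule emb_lo_id)
  have WMid: "\<And>p q. p < (j+1)*d \<or> q < (j+1)*d \<Longrightarrow> emb_lo d j M' p q = ident p q"
    unfolding M'_def by (rule WM_id[OF d])
  show ?thesis
  proof (cases "even j")
    case True
    then obtain t where t: "j = 2*t" by blast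
    let ?WL = "emb_lo d j L'" and ?WM = "emb_lo d j M'"
    have ULid: "\<And>p q. j*d \<le> p \<or> j*d \<le> q \<Longrightarrow> UL p q = ident p q"
      unfolding UL_def Lj_def by (rule UL_even[OF t d])
    have Ls: "L = (\<lambda>p q. if p < j*d then UL p q else ?WL p q)"
      unfolding L_def UL_def Lj_def L'_def a'_def by (rule Lsplit_even[OF t d])
    have Ms: "M = (\<lambda>p q. if p < (j+1)*d then UM p q else ?WM p q)"
      unfolding M_def UM_def Mj_def M'_def a'_def by (rule Msplit_even[OF t d])
    have L1: "L = mprod ?WL UL" unfolding Ls by (rule disj_prod(2)[OF ULid loid, symmetric])
    have L2: "L = mprod UL ?WL" unfolding Ls by (rule disj_prod(1)[OF ULid loid, symmetric])
    have M1: "M = mprod UM ?WM" unfolding Ms UM_def by (rule disj_prod(1)[OF hiid WMid, symmetric])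
    have M2: "M = mprod ?WM UM" unfolding Ms UM_def by (rule disj_prod(2)[OF hiid WMid, symmetric])
    have c1: "mprod (mprod UL UM) ?WM = mprod ?WM (mprod UL UM)"
    proof -
      have h: "\<And>p q. (j+1)*d \<le> p \<or> (j+1)*d \<le> q \<Longrightarrow> mprod UL UM p q = ident p q"
        using hiLM hiid by metis
      show ?thesis using disj_prod[OF h WMid] by simp
    qed
    have c2: "mprod (mprod ?WM ?WL) UL = mprod UL (mprod ?WM ?WL)"
    proof -
      have h: "\<And>p q. p < j*d \<or> q < j*d \<Longrightarrow> mprod ?WM ?WL p q = ident p q"
        using loML loid by metis
      show ?thesis using disj_prod[OF ULid h] by simp
    qed
    have "cmv d a = mprod (mprod ?WL UL) (mprod UM ?WM)" using C L1 M1 by simp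
    also have "\<dots> = mprod (mprod ?WL ?WM) (mprod UL UM)"
      by (rule mprod_chain[OF rf(3,1,2,4) c1])
    finally have X: "cmv d a = mprod (emb_lo d j (cmv d a')) (emb_hi d j (cmv_fin d a j))"
      using loLM hiLM by simp
    have "cmv_hat d a = mprod (mprod UM ?WM) (mprod ?WL UL)" using Ch L1 M1 by simp
    also have "\<dots> = mprod (mprod UM UL) (mprod ?WM ?WL)"
      by (rule mprod_chain[OF rf(2,4,3,1) c2])
    finally have Y: "cmv_hat d a = mprod (emb_hi d j (cmv_hat_fin d a j)) (emb_lo d j (cmv_hat d a'))"
      using loML hiML by simp
    show ?thesis using X Y True unfolding a'_def by simp
  next
    case False
    then obtain t where t: "j = 2*t+1" using oddE by blast
    let ?WL = "emb_lo d j M'" and ?WM = "emb_lo d j L'"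
    have UMid: "\<And>p q. j*d \<le> p \<or> j*d \<le> q \<Longrightarrow> UM p q = ident p q"
      unfolding UM_def Mj_def by (rule UM_odd[OF t d])
    have Ls: "L = (\<lambda>p q. if p < (j+1)*d then UL p q else ?WL p q)"
      unfolding L_def UL_def Lj_def M'_def a'_def by (rule Lsplit_odd[OF t d])
    have Ms: "M = (\<lambda>p q. if p < j*d then UM p q else ?WM p q)"
      unfolding M_def UM_def Mj_def L'_def a'_def by (rule Msplit_odd[OF t d])
    have L1: "L = mprod UL ?WL" unfolding Ls UL_def by (rule disj_prod(1)[OF hiid WMid, symmetric])
    have M1: "M = mprod UM ?WM" unfolding Ms by (rule disj_prod(1)[OF UMid loid, symmetric])
    have c1: "mprod (mprod ?WL ?WM) UM = mprod UM (mprod ?WL ?WM)"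
    proof -
      have h: "\<And>p q. p < j*d \<or> q < j*d \<Longrightarrow> mprod ?WL ?WM p q = ident p q"
        using loML loid by metis
      show ?thesis using disj_prod[OF UMid h] by simp
    qed
    have c2: "mprod (mprod UM UL) ?WL = mprod ?WL (mprod UM UL)"
    proof -
      have h: "\<And>p q. (j+1)*d \<le> p \<or> (j+1)*d \<le> q \<Longrightarrow> mprod UM UL p q = ident p q"
        using hiML hiid by metis
      show ?thesis using disj_prod[OF h WMid] by simp
    qed
    have M2: "M = mprod ?WM UM" unfolding Ms by (rule disj_prod(2)[OF UMid loid, symmetric])
    have L2: "L = mprod ?WL UL" unfolding Ls UL_def by (rule disj_prod(2)[OF hiid WMid, symmetric])
    have "cmv d a = mprod (mprod UL ?WL) (mprod ?WM UM)" using C L1 M2 by simp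
    also have "\<dots> = mprod (mprod UL UM) (mprod ?WL ?WM)"
      by (rule mprod_chain[OF rf(1,4,3,2) c1])
    finally have X: "cmv d a = mprod (emb_hi d j (cmv_fin d a j)) (emb_lo d j (cmv_hat d a'))"
      using loML hiLM by simp
    have "cmv_hat d a = mprod (mprod ?WM UM) (mprod UL ?WL)" using Ch L1 M2 by simp
    also have "\<dots> = mprod (mprod ?WM ?WL) (mprod UM UL)"
      by (rule mprod_chain[OF rf(3,2,1,4) c2])
    finally have Y: "cmv_hat d a = mprod (emb_lo d j (cmv d a')) (emb_hi d j (cmv_hat_fin d a j))"
      using loLM hiML by simp
    show ?thesis using X Y False unfolding a'_def by simp
  qed
qed


end
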